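(* Let $\mathcal{F}=\{f_i\}_{i=1}^N$ be a frame for $\mathbb{R}^n$ of length $N$ which has the exact PR-redundancy property and satisfies $d(\mathcal{F})<n$. Then $N<n(n+1)/2$.
   Context: A frame for $\mathbb{R}^n$ is a finite spanning sequence; $\mathcal{F}_\Lambda=\{f_i\}_{i\in\Lambda}$ for $\Lambda\subseteq\{1,\dots,N\}$. Let $\mathcal{S}_2$ be the set of real symmetric $n\times n$ matrices of rank at most $2$ and $\Theta_{L(\mathcal{F}_\Lambda)}(A)=(f_i^TAf_i)_{i\in\Lambda}$. $\mathcal{F}$ has the exact PR-redundancy property if $\ker(\Theta_{L(\mathcal{F}_\Lambda)})\cap\mathcal{S}_2\neq\ker(\Theta_{L(\mathcal{F})})\cap\mathcal{S}_2$ for every proper subset $\Lambda$. With $\Lambda^c$ the complement, $d_\Lambda=\max\{\dim\mathrm{span}(\mathcal{F}_\Lambda),\dim\mathrm{span}(\mathcal{F}_{\Lambda^c})\}$ and $d(\mathcal{F})=\min_{\Lambda\subseteq\{1,\dots,N\}}d_\Lambda$. *)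

theory Defs
  imports "HOL-Analysis.Analysis"
begin

definition is_frame :: "nat \<Rightarrow> (nat \<Rightarrow> real^'n) \<Rightarrow> bool" where
  "is_frame N f \<longleftrightarrow> span (f ` {1..N}) = UNIV"

definition S2 :: "(real^'n^'n) set" where
  "S2 = {A. transpose A = A \<and> rank A \<le> 2}"

text \<open>Kernel of Theta_{L(F_Lambda)}, A \<mapsto> (f_i^T A f_i)_{i in Lambda}, on symmetric matrices.\<close>
definition ker_Theta :: "(nat \<Rightarrow> real^'n) \<Rightarrow> nat set \<Rightarrow> (real^'n^'n) set" where
  "ker_Theta f \<Lambda> = {A. transpose A = A \<and> (\<forall>i\<in>\<Lambda>. f i \<bullet> (A *v f i) = 0)}"

definition exact_PR_redundancy :: "nat \<Rightarrow> (nat \<Rightarrow> real^'n) \<Rightarrow> bool" where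
  "exact_PR_redundancy N f \<longleftrightarrow>
     (\<forall>\<Lambda>. \<Lambda> \<subset> {1..N} \<longrightarrow> ker_Theta f \<Lambda> \<inter> S2 \<noteq> ker_Theta f {1..N} \<inter> S2)"

definition d_Lambda :: "nat \<Rightarrow> (nat \<Rightarrow> real^'n) \<Rightarrow> nat set \<Rightarrow> nat" where
  "d_Lambda N f \<Lambda> = max (dim (span (f ` \<Lambda>))) (dim (span (f ` ({1..N} - \<Lambda>))))"

definition d_frame :: "nat \<Rightarrow> (nat \<Rightarrow> real^'n) \<Rightarrow> nat" where
  "d_frame N f = Min {d_Lambda N f \<Lambda> | \<Lambda>. \<Lambda> \<subseteq> {1..N}}"

end

theory Submission
  imports Defs
begin

definition Pset :: "nat \<Rightarrow> (nat \<times> nat) set" where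
  "Pset n = {(a,b). a \<le> b \<and> b < n}"

lemma Pset_card: "2 * card (Pset n) = n * (n + 1)"
proof (induction n)
  case 0
  then show ?case by (simp add: Pset_def)
next
  case (Suc n)
  have eq: "Pset (Suc n) = Pset n \<union> (\<lambda>a. (a, n)) ` {..n}"
    by (auto simp: Pset_def)
  have fin: "finite (Pset n)"
    by (rule finite_subset[of _ "{..n} \<times> {..n}"]) (auto simp: Pset_def)
  have disj: "Pset n \<inter> (\<lambda>a. (a, n)) ` {..n} = {}" by (auto simp: Pset_def)
  have "card (Pset (Suc n)) = card (Pset n) + card ((\<lambda>a. (a, n)) ` {..n})"
    unfolding eq by (rule card_Un_disjoint) (use fin disj in auto)
  also have "card ((\<lambda>a. (a, n)) ` {..n}) = Suc n"
    by (subst card_image) (auto simp: inj_on_def)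
  finally show ?case using Suc by simp
qed

lemma phi_sum:
  fixes M :: "'b \<Rightarrow> real^'n^'n" and x :: "real^'n"
  assumes "finite t"
  shows "x \<bullet> ((\<Sum>w\<in>t. c w *\<^sub>R M w) *v x) = (\<Sum>w\<in>t. c w * (x \<bullet> (M w *v x)))"
  using assms
proof (induction t rule: finite_induct)
  case empty
  then show ?case by simp
next
  case (insert a t)
  then show ?case
    by (simp add: matrix_vector_mult_add_rdistrib inner_add_right
        scaleR_matrix_vector_assoc[symmetric])
qed

definition Bm :: "real^'n \<Rightarrow> real^'n \<Rightarrow> real^'n^'n" where
  "Bm u v = (\<chi> i j. u$i * v$j + v$i * u$j)"

lemma Bm_mult: "Bm u v *v x = (v \<bullet> x) *\<^sub>R u + (u \<bullet> x) *\<^sub>R v"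
  by (simp add: vec_eq_iff Bm_def matrix_vector_mult_def inner_vec_def
      sum_distrib_left sum_distrib_right sum.distrib algebra_simps)

lemma Bm_transpose: "transpose (Bm u v) = Bm u v"
  by (simp add: vec_eq_iff Bm_def transpose_def)

definition Sm :: "'n \<Rightarrow> 'n \<Rightarrow> real^'n^'n" where
  "Sm i j = (\<chi> k l. (if k = i \<and> l = j then 1 else 0) + (if k = j \<and> l = i then 1 else 0))"

lemma sym_decomp:
  fixes A :: "real^'n^'n"
  assumes "transpose A = A"
  shows "A = (\<Sum>i\<in>UNIV. \<Sum>j\<in>UNIV. (A$i$j / 2) *\<^sub>R Sm i j)"
proof -
  have s: "A$l$k = A$k$l" for k l
    using assms by (metis transpose_def vec_lambda_beta)
  have "(\<Sum>i\<in>UNIV. \<Sum>j\<in>UNIV. (A$i$j / 2) *\<^sub>R Sm i j) $ k $ l = A $ k $ l" for k l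
  proof -
    have t: "(A$i$j / 2) * (Sm i j $ k $ l) = (if i = k \<and> j = l then A$i$j / 2 else 0)
       + (if j = k \<and> i = l then A$i$j / 2 else 0)" for i j
      proof -
        have "Sm i j $ k $ l = (if k = i \<and> l = j then 1 else 0) + (if k = j \<and> l = i then 1 else 0)"
          unfolding Sm_def by simp
        then show ?thesis by (cases "i = k"; cases "j = l"; cases "j = k"; cases "i = l") simp_all
      qed
    have "(\<Sum>i\<in>UNIV. \<Sum>j\<in>UNIV. (A$i$j / 2) *\<^sub>R Sm i j) $ k $ l
       = (\<Sum>i\<in>UNIV. \<Sum>j\<in>UNIV. (A$i$j / 2) * (Sm i j $ k $ l))"
      by simp
    also have "\<dots> = (\<Sum>i\<in>UNIV. \<Sum>j\<in>UNIV. (if i = k \<and> j = l then A$i$j / 2 else 0))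
         + (\<Sum>i\<in>UNIV. \<Sum>j\<in>UNIV. (if j = k \<and> i = l then A$i$j / 2 else 0))"
      unfolding t by (simp only: sum.distrib)
    also have "(\<Sum>i\<in>UNIV. \<Sum>j\<in>UNIV. (if i = k \<and> j = l then A$i$j / 2 else 0)) = A$k$l/2"
    proof -
      have "(\<Sum>j\<in>UNIV. (if i = k \<and> j = l then A$i$j / 2 else 0)) = (if i = k then A$i$l/2 else 0)" for i
        by (cases "i = k") simp_all
      then show ?thesis by simp
    qed
    also have "(\<Sum>i\<in>UNIV. \<Sum>j\<in>UNIV. (if j = k \<and> i = l then A$i$j / 2 else 0)) = A$l$k/2"
    proof -
      have "(\<Sum>j\<in>UNIV. (if j = k \<and> i = l then A$i$j / 2 else 0)) = (if i = l then A$i$k/2 else 0)" for i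
        by (cases "i = l") simp_all
      then show ?thesis by simp
    qed
    also have "A$k$l / 2 + A$l$k / 2 = A$k$l" using s[of l k] by simp
    finally show ?thesis .
  qed
  then show ?thesis by (simp add: vec_eq_iff)
qed


lemma card_span_bound:
  "\<exists>G::(real^'n^'n) set. finite G \<and> 2 * card G \<le> CARD('n) * (CARD('n) + 1)
     \<and> {A. transpose A = A} \<subseteq> span G"
proof -
  obtain h where h: "bij_betw h {0..<CARD('n)} (UNIV::'n set)"
    using ex_bij_betw_nat_finite[of "UNIV::'n set"] by auto
  define G where "G = (\<lambda>(a,b). Sm (h a) (h b)) ` Pset CARD('n)"
  have finP: "finite (Pset m)" for m
    by (rule finite_subset[of _ "{..m} \<times> {..m}"]) (auto simp: Pset_def)
  have "card G \<le> card (Pset CARD('n))" unfolding G_def by (rule card_image_le[OF finP])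
  hence c: "2 * card G \<le> CARD('n) * (CARD('n)+1)" using Pset_card[of "CARD('n)"] by linarith
  have Sm_sym: "Sm i j = Sm j i" for i j by (simp only: Sm_def add.commute)
  have hs: "\<exists>a. a < CARD('n) \<and> h a = i" for i
    using h unfolding bij_betw_def by (metis atLeastLessThan_iff imageE UNIV_I)
  have inG: "Sm i j \<in> G" for i j
  proof -
    obtain a where a: "a < CARD('n)" "h a = i" using hs by blast
    obtain b where b: "b < CARD('n)" "h b = j" using hs by blast
    show ?thesis
    proof (cases "a \<le> b")
      case True then have "(a,b) \<in> Pset CARD('n)" using b by (auto simp: Pset_def)
      then show ?thesis unfolding G_def using a b by force
    next
      case False then have "(b,a) \<in> Pset CARD('n)" using a by (auto simp: Pset_def)
      then show ?thesis unfolding G_def using a b Sm_sym by force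
    qed
  qed
  have "{A. transpose A = A} \<subseteq> span G"
  proof
    fix A :: "real^'n^'n" assume "A \<in> {A. transpose A = A}"
    then have "A = (\<Sum>i\<in>UNIV. \<Sum>j\<in>UNIV. (A$i$j / 2) *\<^sub>R Sm i j)"
      using sym_decomp by blast
    also have "\<dots> \<in> span G" by (intro span_sum span_scale span_base inG)
    finally show "A \<in> span G" .
  qed
  moreover have "finite G" unfolding G_def using finP by blast
  ultimately show ?thesis using c by blast
qed

theorem proposition3p8:
  fixes f :: "nat \<Rightarrow> real^'n" and N :: nat
  assumes "is_frame N f"
    and "exact_PR_redundancy N f"
    and "d_frame N f < CARD('n)"
  shows "real N < real CARD('n) * (real CARD('n) + 1) / 2"
proof -
  define n where "n = CARD('n)"
  define phi where "phi j M = f j \<bullet> (M *v f j)" for j M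
  have eqS: "{d_Lambda N f L | L. L \<subseteq> {1..N}} = d_Lambda N f ` Pow {1..N}" by auto
  have fin: "finite {d_Lambda N f L | L. L \<subseteq> {1..N}}" unfolding eqS by simp
  have ne: "{d_Lambda N f L | L. L \<subseteq> {1..N}} \<noteq> {}" by auto
  obtain L where L: "L \<subseteq> {1..N}" "d_Lambda N f L < n"
    using Min_in[OF fin ne] assms(3) unfolding d_frame_def n_def by auto
  hence d1: "dim (f ` L) < n" and d2: "dim (f ` ({1..N}-L)) < n" by (auto simp: d_Lambda_def)
  obtain u where u: "u \<noteq> 0" "\<And>y. y \<in> span (f ` L) \<Longrightarrow> orthogonal u y"
    using orthogonal_to_subspace_exists[of "f ` L"] d1 by (auto simp: n_def)
  obtain v where v: "v \<noteq> 0" "\<And>y. y \<in> span (f ` ({1..N}-L)) \<Longrightarrow> orthogonal v y"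
    using orthogonal_to_subspace_exists[of "f ` ({1..N}-L)"] d2 by (auto simp: n_def)
  define B where "B = Bm u v"
  have Bphi: "phi j B = 0" if j: "j \<in> {1..N}" for j
  proof (cases "j \<in> L")
    case True
    then have "u \<bullet> f j = 0" using u(2)[of "f j"] by (simp add: span_base orthogonal_def)
    then show ?thesis by (simp add: phi_def B_def Bm_mult inner_add_right inner_commute)
  next
    case False
    then have "v \<bullet> f j = 0" using v(2)[of "f j"] j by (simp add: span_base orthogonal_def)
    then show ?thesis by (simp add: phi_def B_def Bm_mult inner_add_right inner_commute)
  qed
  have B0: "B \<noteq> 0"
  proof
    assume "B = 0"
    then have "u \<bullet> (B *v v) = 0" by simp
    moreover have "u \<bullet> (B *v v) = (v \<bullet> v) * (u \<bullet> u) + (u \<bullet> v) * (u \<bullet> v)"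
      by (simp add: B_def Bm_mult inner_add_right inner_commute)
    moreover have "(v \<bullet> v) * (u \<bullet> u) > 0" using u(1) v(1) by simp
    moreover have "(u \<bullet> v) * (u \<bullet> v) \<ge> 0" by simp
    ultimately show False by linarith
  qed
  have "\<forall>i\<in>{1..N}. \<exists>M. transpose M = M \<and> phi i M \<noteq> 0 \<and> (\<forall>j\<in>{1..N}. j \<noteq> i \<longrightarrow> phi j M = 0)"
  proof
    fix i assume i: "i \<in> {1..N}"
    have sub: "{1..N} - {i} \<subset> {1..N}" using i by blast
    have pr: "\<forall>\<Lambda>. \<Lambda> \<subset> {1..N} \<longrightarrow> ker_Theta f \<Lambda> \<inter> S2 \<noteq> ker_Theta f {1..N} \<inter> S2"
      using assms(2) by (simp only: exact_PR_redundancy_def)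
    have ne: "ker_Theta f ({1..N} - {i}) \<inter> S2 \<noteq> ker_Theta f {1..N} \<inter> S2"
      using mp[OF spec[OF pr, of "{1..N} - {i}"] sub] .
    have ss: "ker_Theta f {1..N} \<inter> S2 \<subseteq> ker_Theta f ({1..N} - {i}) \<inter> S2"
      unfolding ker_Theta_def by blast
    have "\<not> (ker_Theta f ({1..N} - {i}) \<inter> S2 \<subseteq> ker_Theta f {1..N} \<inter> S2)"
      using ne ss by (metis subset_antisym)
    then obtain M where M1: "M \<in> ker_Theta f ({1..N} - {i})" and M2: "M \<notin> ker_Theta f {1..N}"
      unfolding subset_iff by blast
    have tM: "transpose M = M" and z: "\<forall>j\<in>{1..N} - {i}. phi j M = 0"
      using M1 unfolding ker_Theta_def phi_def by simp_all
    have "\<not> (\<forall>j\<in>{1..N}. phi j M = 0)" using M2 tM unfolding ker_Theta_def phi_def by simp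
    then have "phi i M \<noteq> 0" using z by blast
    then show "\<exists>M. transpose M = M \<and> phi i M \<noteq> 0 \<and> (\<forall>j\<in>{1..N}. j \<noteq> i \<longrightarrow> phi j M = 0)"
      using tM z by blast
  qed
  from bchoice[OF this] obtain A where A': "\<forall>i\<in>{1..N}. transpose (A i) = A i \<and> phi i (A i) \<noteq> 0
      \<and> (\<forall>j\<in>{1..N}. j \<noteq> i \<longrightarrow> phi j (A i) = 0)" by blast
  have A: "transpose (A i) = A i \<and> phi i (A i) \<noteq> 0
      \<and> (\<forall>j\<in>{1..N}. j \<noteq> i \<longrightarrow> phi j (A i) = 0)" if "i \<in> {1..N}" for i
    using A' that by blast
  have injA: "inj_on A {1..N}"
  proof (rule inj_onI, rule ccontr)
    fix i j assume i: "i \<in> {1..N}" and j: "j \<in> {1..N}" and e: "A i = A j" and ne: "i \<noteq> j"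
    have "phi j (A i) = 0"
      using bspec[OF conjunct2[OF conjunct2[OF A[OF i]]] j] ne[symmetric] by (rule mp)
    moreover have "phi j (A j) \<noteq> 0" using A[OF j] by blast
    ultimately show False using e by simp
  qed
  have BnA: "B \<notin> A ` {1..N}"
  proof
    assume "B \<in> A ` {1..N}"
    then obtain i where i: "i \<in> {1..N}" and e: "B = A i" by blast
    have "phi i B = 0" using Bphi[OF i] .
    moreover have "phi i (A i) \<noteq> 0" using A[OF i] by blast
    ultimately show False using e by simp
  qed
  define T where "T = insert B (A ` {1..N})"
  have finT: "finite T" by (simp add: T_def)
  have cardT: "card T = N + 1"
  proof -
    have "card T = Suc (card (A ` {1..N}))" unfolding T_def using BnA by simp
    also have "card (A ` {1..N}) = N" using card_image[OF injA] by simp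
    finally show ?thesis by simp
  qed
  have phiT: "phi j w = 0" if j: "j \<in> {1..N}" and w: "w \<in> T" and wn: "w \<noteq> A j" for j w
  proof (cases "w = B")
    case True then show ?thesis using Bphi[OF j] by simp
  next
    case False
    then obtain i where i: "i \<in> {1..N}" and e: "w = A i" using w unfolding T_def by blast
    then have "j \<noteq> i" using wn by blast
    then have "phi j (A i) = 0"
      using bspec[OF conjunct2[OF conjunct2[OF A[OF i]]] j] by (rule rev_mp)
    then show ?thesis using e by simp
  qed
  have indT: "independent T"
  proof -
    { fix c assume c: "(\<Sum>w\<in>T. c w *\<^sub>R w) = 0"
      have cA: "c (A j) = 0" if j: "j \<in> {1..N}" for j
      proof -
        have "0 = phi j (\<Sum>w\<in>T. c w *\<^sub>R w)" by (simp add: c phi_def)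
        also have "\<dots> = (\<Sum>w\<in>T. c w * phi j w)" unfolding phi_def by (rule phi_sum[OF finT])
        also have "\<dots> = (\<Sum>w\<in>T. if w = A j then c w * phi j w else 0)"
          by (rule sum.cong) (auto simp: phiT[OF j])
        also have "\<dots> = c (A j) * phi j (A j)" using j by (simp add: sum.delta[OF finT] T_def)
        finally show ?thesis using A[OF j] by simp
      qed
      have "(\<Sum>w\<in>T. c w *\<^sub>R w) = c B *\<^sub>R B + (\<Sum>w\<in>A ` {1..N}. c w *\<^sub>R w)"
        using BnA by (simp add: T_def)
      also have "(\<Sum>w\<in>A ` {1..N}. c w *\<^sub>R w) = 0" using cA by (auto intro: sum.neutral)
      finally have "c B = 0" using c B0 by simp
      hence "\<forall>w\<in>T. c w = 0" using cA T_def by auto }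
    then show ?thesis using dependent_finite[OF finT] by auto
  qed
  obtain G :: "(real^'n^'n) set" where G: "finite G" "2 * card G \<le> n * (n + 1)"
      "{A. transpose A = A} \<subseteq> span G"
    using card_span_bound unfolding n_def by blast
  have "B \<in> span G" using G(3) Bm_transpose[of u v] unfolding B_def by blast
  moreover have "A i \<in> span G" if "i \<in> {1..N}" for i
    using G(3) conjunct1[OF A[OF that]] by blast
  ultimately have "T \<subseteq> span G" unfolding T_def by blast
  then have "card T \<le> card G" using independent_span_bound[OF G(1) indT] by auto
  then have "2 * (N + 1) \<le> 2 * card G" using cardT by simp
  then have "2 * (N + 1) \<le> n * (n + 1)" using G(2) by (rule le_trans)
  then have "real (2 * (N + 1)) \<le> real (n * (n + 1))" by (simp only: of_nat_le_iff)
  then have "2 + 2 * real N \<le> real n + real n * real n" by simp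
  then have "real N * 2 < real n * (real n + 1)" by (simp add: algebra_simps)
  then show ?thesis unfolding n_def[symmetric] by simp
qed

end
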